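(* For every $\varepsilon>0$, the Pruned Plurality Veto rule with parameter $\varepsilon$ has metric distortion at most $9+\varepsilon$ and utilitarian distortion at most $\frac{(6+\varepsilon)m^2}{\varepsilon}=O(m^2/\varepsilon)$.
   Context: Setting: $\mathcal N$ is a set of $n$ agents and $\mathcal A$ a set of $m$ alternatives; each agent $i$ has a strict ranking $\sigma_i$ of $\mathcal A$, $X\succ_i Y$ meaning $i$ ranks $X$ above $Y$; the plurality score $\mathrm{plu}(X,\vec\sigma)$ is the number of agents ranking $X$ first. Metric framework: a pseudometric $d$ on $\mathcal N\cup\mathcal A$ is consistent with $\vec\sigma$ if $X\succ_iY\Rightarrow d(i,X)\le d(i,Y)$; $\mathrm{SC}(X,d)=\sum_i d(i,X)$; metric distortion of a rule $f$ is $\sup_{\vec\sigma}\sup_{d\text{ consistent}}\mathbb E_{X\sim f(\vec\sigma)}[\mathrm{SC}(X,d)]/\min_X\mathrm{SC}(X,d)$. Utilitarian framework: $u_i:\mathcal A\to\mathbb R_{\ge0}$ with $\sum_X u_i(X)=1$, consistent with $\vec\sigma$ if $X\succ_iY\Rightarrow u_i(X)\ge u_i(Y)$; $\mathrm{SW}(X,\vec u)=\sum_iu_i(X)$; utilitarian distortion of $f$ is $\sup_{\vec\sigma}\sup_{\vec u\text{ consistent}}\max_X\mathrm{SW}(X,\vec u)/\mathbb E_{X\sim f(\vec\sigma)}[\mathrm{SW}(X,\vec u)]$. Plurality Veto: initialize $\mathrm{score}(X)=\mathrm{plu}(X,\vec\sigma)$; let $S$ be the alternatives with positive score; process agents in a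 fixed order, each agent decrementing the score of her lowest-ranked alternative in $S$ and removing it from $S$ if its score hits $0$; output the last alternative removed. (Plurality Veto is known to have metric distortion $3$.) Pruned Plurality Veto with parameter $\varepsilon>0$: compute $\mathcal A'=\{X:\mathrm{plu}(X,\vec\sigma)\ge \frac{\varepsilon n}{(6+\varepsilon)m}\}$ (nonempty), restrict every ranking to $\mathcal A'$, and output the result of Plurality Veto on the restricted profile. *)

theory Defs
  imports Complex_Main
begin

text \<open>A profile over the alternative set A is a nonempty list of rankings
  (agent i is the i-th list element, so the list order is the fixed processing
  order of Plurality Veto); each ranking is a list of all alternatives without
  repetition, most preferred first.\<close>

definition valid_profile :: "'a set \<Rightarrow> 'a list list \<Rightarrow> bool" where
  "valid_profile A P \<longleftrightarrow> finite A \<and> A \<noteq> {} \<and> P \<noteq> [] \<and>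
     (\<forall>r\<in>set P. distinct r \<and> set r = A)"

definition prefers :: "'a list list \<Rightarrow> nat \<Rightarrow> 'a \<Rightarrow> 'a \<Rightarrow> bool" where
  "prefers P i X Y \<longleftrightarrow> (\<exists>j k. j < k \<and> k < length (P ! i) \<and> P ! i ! j = X \<and> P ! i ! k = Y)"

definition plu :: "'a \<Rightarrow> 'a list list \<Rightarrow> nat" where
  "plu X P = length (filter (\<lambda>r. r \<noteq> [] \<and> hd r = X) P)"

definition pv_step :: "('a \<Rightarrow> nat) \<times> 'a set \<times> 'a option \<Rightarrow> 'a list \<Rightarrow> ('a \<Rightarrow> nat) \<times> 'a set \<times> 'a option" where
  "pv_step st r = (case st of (sc, S, lst) \<Rightarrow>
     (let Y = last (filter (\<lambda>x. x \<in> S) r); sc' = sc(Y := sc Y - 1) in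
      if sc' Y = 0 then (sc', S - {Y}, Some Y) else (sc', S, lst)))"

definition plurality_veto :: "'a set \<Rightarrow> 'a list list \<Rightarrow> 'a" where
  "plurality_veto A P =
     the (snd (snd (foldl pv_step
        ((\<lambda>X. plu X P), {X \<in> A. plu X P > 0}, None) P)))"

definition pruned_set :: "real \<Rightarrow> 'a set \<Rightarrow> 'a list list \<Rightarrow> 'a set" where
  "pruned_set \<epsilon> A P = {X \<in> A. real (plu X P) \<ge>
      \<epsilon> * real (length P) / ((6 + \<epsilon>) * real (card A))}"

definition pruned_plurality_veto :: "real \<Rightarrow> 'a set \<Rightarrow> 'a list list \<Rightarrow> 'a" where
  "pruned_plurality_veto \<epsilon> A P =
     (let A' = pruned_set \<epsilon> A P in plurality_veto A' (map (filter (\<lambda>x. x \<in> A')) P))"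

text \<open>Metric framework. Points: alternatives are Inl X, agents are Inr i.\<close>

definition points :: "'a set \<Rightarrow> 'a list list \<Rightarrow> ('a + nat) set" where
  "points A P = Inl ` A \<union> Inr ` {..<length P}"

definition pseudometric_on :: "'b set \<Rightarrow> ('b \<Rightarrow> 'b \<Rightarrow> real) \<Rightarrow> bool" where
  "pseudometric_on U d \<longleftrightarrow>
     (\<forall>x\<in>U. d x x = 0) \<and> (\<forall>x\<in>U. \<forall>y\<in>U. d x y \<ge> 0 \<and> d x y = d y x) \<and>
     (\<forall>x\<in>U. \<forall>y\<in>U. \<forall>z\<in>U. d x z \<le> d x y + d y z)"

definition metric_consistent :: "'a set \<Rightarrow> 'a list list \<Rightarrow> ('a + nat \<Rightarrow> 'a + nat \<Rightarrow> real) \<Rightarrow> bool" where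
  "metric_consistent A P d \<longleftrightarrow> pseudometric_on (points A P) d \<and>
     (\<forall>i<length P. \<forall>X\<in>A. \<forall>Y\<in>A. prefers P i X Y \<longrightarrow> d (Inr i) (Inl X) \<le> d (Inr i) (Inl Y))"

definition SC :: "'a list list \<Rightarrow> ('a + nat \<Rightarrow> 'a + nat \<Rightarrow> real) \<Rightarrow> 'a \<Rightarrow> real" where
  "SC P d X = (\<Sum>i<length P. d (Inr i) (Inl X))"

definition metric_distortion_at_most :: "('a set \<Rightarrow> 'a list list \<Rightarrow> 'a) \<Rightarrow> real \<Rightarrow> bool" where
  "metric_distortion_at_most f c \<longleftrightarrow>
     (\<forall>A P d. valid_profile A P \<longrightarrow> metric_consistent A P d \<longrightarrow>
        (\<forall>X\<in>A. SC P d (f A P) \<le> c * SC P d X))"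

definition util_consistent :: "'a set \<Rightarrow> 'a list list \<Rightarrow> (nat \<Rightarrow> 'a \<Rightarrow> real) \<Rightarrow> bool" where
  "util_consistent A P u \<longleftrightarrow>
     (\<forall>i<length P. (\<forall>X\<in>A. u i X \<ge> 0) \<and> (\<Sum>X\<in>A. u i X) = 1 \<and>
        (\<forall>X\<in>A. \<forall>Y\<in>A. prefers P i X Y \<longrightarrow> u i X \<ge> u i Y))"

definition SW :: "'a list list \<Rightarrow> (nat \<Rightarrow> 'a \<Rightarrow> real) \<Rightarrow> 'a \<Rightarrow> real" where
  "SW P u X = (\<Sum>i<length P. u i X)"

definition util_distortion_at_most :: "('a set \<Rightarrow> 'a list list \<Rightarrow> 'a) \<Rightarrow> (nat \<Rightarrow> real) \<Rightarrow> bool" where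
  "util_distortion_at_most f c \<longleftrightarrow>
     (\<forall>A P u. valid_profile A P \<longrightarrow> util_consistent A P u \<longrightarrow>
        (\<forall>X\<in>A. SW P u X \<le> c (card A) * SW P u (f A P)))"

end

theory Submission
  imports Defs
begin

definition before :: "'a list \<Rightarrow> 'a \<Rightarrow> 'a \<Rightarrow> bool" where
  "before r x y \<longleftrightarrow> (\<exists>a c. r = a @ y # c \<and> x \<in> set a)"

lemma before_filter: "before (filter Q r) x y \<Longrightarrow> before r x y"
proof (induction r)
  case Nil then show ?case by (auto simp: before_def)
next
  case (Cons z r)
  show ?case
  proof (cases "Q z")
    case False
    then have "before (filter Q r) x y" using Cons.prems by simp
    then obtain a c where "r = a @ y # c" "x \<in> set a" using Cons.IH unfolding before_def by blast
    then show ?thesis unfolding before_def by (intro exI[of _ "z#a"] exI[of _ c]) auto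
  next
    case True
    from Cons.prems True obtain a c where ac: "z # filter Q r = a @ y # c" "x \<in> set a"
      by (auto simp: before_def)
    then obtain a' where a': "a = z # a'" by (cases a) auto
    with ac have fr: "filter Q r = a' @ y # c" by simp
    show ?thesis
    proof (cases "x = z")
      case True
      have "y \<in> set r" using fr by (metis in_set_conv_decomp filter_is_subset subsetD)
      then obtain p q where "r = p @ y # q" by (meson split_list)
      then show ?thesis unfolding before_def using True by (intro exI[of _ "z#p"] exI[of _ q]) auto
    next
      case False
      with ac a' have "x \<in> set a'" by simp
      with fr have "before (filter Q r) x y" unfolding before_def by blast
      then obtain p q where "r = p @ y # q" "x \<in> set p" using Cons.IH unfolding before_def by blast
      then show ?thesis unfolding before_def by (intro exI[of _ "z#p"] exI[of _ q]) auto
    qed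
  qed
qed

lemma before_idx: "before r x y \<Longrightarrow> \<exists>j k. j < k \<and> k < length r \<and> r ! j = x \<and> r ! k = y"
proof -
  assume "before r x y"
  then obtain a c where ac: "r = a @ y # c" "x \<in> set a" by (auto simp: before_def)
  then obtain j where j: "j < length a" "a ! j = x" by (meson in_set_conv_nth)
  show ?thesis
    by (rule exI[of _ j], rule exI[of _ "length a"]) (use ac j in \<open>auto simp: nth_append\<close>)
qed

lemma last_filter_split: "filter S r \<noteq> [] \<Longrightarrow> \<exists>r1 r2. r = r1 @ last (filter S r) # r2 \<and> (\<forall>z\<in>set r2. \<not> S z)"
proof (induction r rule: rev_induct)
  case Nil then show ?case by simp
next
  case (snoc x xs)
  show ?case
  proof (cases "S x")
    case True then show ?thesis by (intro exI[of _ xs] exI[of _ "[]"]) auto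
  next
    case False
    then have "filter S (xs @ [x]) = filter S xs" by simp
    with snoc obtain r1 r2 where "xs = r1 @ last (filter S xs) # r2" "\<forall>z\<in>set r2. \<not> S z" by auto
    then show ?thesis using False \<open>filter S (xs @ [x]) = filter S xs\<close>
      by (intro exI[of _ r1] exI[of _ "r2 @ [x]"]) auto
  qed
qed

lemma before_last: "W \<in> S \<Longrightarrow> W \<in> set r \<Longrightarrow> W \<noteq> last (filter (\<lambda>x. x \<in> S) r) \<Longrightarrow>
   before r W (last (filter (\<lambda>x. x \<in> S) r))"
proof -
  assume a: "W \<in> S" "W \<in> set r" "W \<noteq> last (filter (\<lambda>x. x \<in> S) r)"
  have "filter (\<lambda>x. x \<in> S) r \<noteq> []" using a by (metis (mono_tags) filter_empty_conv)
  from last_filter_split[OF this] obtain r1 r2 where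
    r: "r = r1 @ last (filter (\<lambda>x. x \<in> S) r) # r2" "\<forall>z\<in>set r2. z \<notin> S" by blast
  then have "W \<in> set r1" using a by (metis Un_iff set_ConsD set_append)
  then show ?thesis unfolding before_def using r by blast
qed

lemma before_hd: "r \<noteq> [] \<Longrightarrow> z \<in> set r \<Longrightarrow> z \<noteq> hd r \<Longrightarrow> before r (hd r) z"
proof -
  assume a: "r \<noteq> []" "z \<in> set r" "z \<noteq> hd r"
  then obtain h t where r: "r = h # t" by (cases r) auto
  with a have "z \<in> set t" by auto
  then obtain p q where "t = p @ z # q" by (meson split_list)
  then show ?thesis unfolding before_def using r by (intro exI[of _ "h#p"] exI[of _ q]) auto
qed

lemma plu_sum:
  assumes "finite B" "\<forall>r\<in>set Q. r \<noteq> [] \<and> hd r \<in> B"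
  shows "(\<Sum>Y\<in>B. real (plu Y Q) * f Y) = (\<Sum>j<length Q. f (hd (Q ! j)))"
proof -
  have "(\<Sum>Y\<in>B. real (plu Y Q) * f Y) = sum_list (map (\<lambda>r. f (hd r)) Q)"
    using assms(2)
  proof (induction Q)
    case Nil then show ?case by (simp add: plu_def)
  next
    case (Cons r Q)
    have p: "plu Y (r # Q) = (if hd r = Y then 1 else 0) + plu Y Q" for Y
      using Cons.prems by (simp add: plu_def)
    have "(\<Sum>Y\<in>B. real (plu Y (r#Q)) * f Y) = (\<Sum>Y\<in>B. (if hd r = Y then f Y else 0)) + (\<Sum>Y\<in>B. real (plu Y Q) * f Y)"
      by (simp add: p sum.distrib[symmetric] algebra_simps, rule sum.cong, auto)
    also have "(\<Sum>Y\<in>B. (if hd r = Y then f Y else 0)) = f (hd r)"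
      using Cons.prems assms(1) by (simp add: sum.delta)
    finally show ?case using Cons by simp
  qed
  also have "\<dots> = (\<Sum>j<length Q. f (hd (Q ! j)))"
    by (simp add: sum_list_sum_nth atLeast0LessThan)
  finally show ?thesis .
qed


lemma pv_main:
  assumes fin: "finite B"
  shows "rcs \<noteq> [] \<Longrightarrow> S = {X\<in>B. sc X > 0} \<Longrightarrow> (\<Sum>X\<in>B. sc X) = length rcs \<Longrightarrow>
    (\<forall>rc\<in>set rcs. set (fst rc) = B \<and> (\<forall>x y. before (fst rc) x y \<longrightarrow> snd rc x \<le> (snd rc y::real))) \<Longrightarrow>
   \<exists>W ys. snd (snd (foldl pv_step (sc,S,lst) (map fst rcs))) = Some W \<and> W \<in> S \<and>
      length ys = length rcs \<and> set ys \<subseteq> B \<and>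
      (\<forall>k<length rcs. snd (rcs!k) W \<le> snd (rcs!k) (ys!k)) \<and>
      (\<forall>f. sum_list (map f ys) = (\<Sum>X\<in>B. real (sc X) * f X))"
proof (induction rcs arbitrary: sc S lst)
  case Nil then show ?case by simp
next
  case (Cons rc rest)
  obtain r c where rc: "rc = (r, c)" by (cases rc)
  have rB: "set r = B" and mono: "\<And>x y. before r x y \<Longrightarrow> c x \<le> c y"
    using Cons.prems(4) rc by auto
  have "(\<Sum>X\<in>B. sc X) > 0" using Cons.prems(3) by simp
  moreover have "(\<forall>X\<in>B. sc X = 0) \<Longrightarrow> (\<Sum>X\<in>B. sc X) = 0" by simp
  ultimately have "\<not> (\<forall>X\<in>B. sc X = 0)" by linarith
  then obtain X0 where X0: "X0 \<in> B" "sc X0 > 0" by auto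
  define Y where "Y = last (filter (\<lambda>x. x \<in> S) r)"
  have fne: "filter (\<lambda>x. x \<in> S) r \<noteq> []" using X0 rB Cons.prems(2)
    by (auto simp: filter_empty_conv)
  have YS: "Y \<in> S" unfolding Y_def using last_in_set[OF fne] by simp
  then have YB: "Y \<in> B" and scY: "sc Y > 0" using Cons.prems(2) by auto
  define sc' where "sc' = sc(Y := sc Y - 1)"
  define st' where "st' = pv_step (sc, S, lst) r"
  have st'_eq: "st' = (if sc' Y = 0 then (sc', S - {Y}, Some Y) else (sc', S, lst))"
    unfolding st'_def pv_step_def Y_def sc'_def by (simp add: Let_def)
  have S': "fst (snd st') = {X\<in>B. sc' X > 0}"
    using st'_eq Cons.prems(2) scY unfolding sc'_def by auto
  have lst': "sc' Y = 0 \<Longrightarrow> snd (snd st') = Some Y" using st'_eq by simp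
  have st'_split: "st' = (sc', fst (snd st'), snd (snd st'))" using st'_eq by auto
  have sumsc: "(\<Sum>X\<in>B. sc X) = sc Y + (\<Sum>X\<in>B-{Y}. sc X)" using fin YB by (simp add: sum.remove)
  have sumsc': "(\<Sum>X\<in>B. sc' X) = sc' Y + (\<Sum>X\<in>B-{Y}. sc X)" using fin YB
    by (simp add: sum.remove sc'_def)
  have realsum: "(\<Sum>X\<in>B. real (sc X) * f X) = f Y + (\<Sum>X\<in>B. real (sc' X) * f X)" for f
  proof -
    have "(\<Sum>X\<in>B. real (sc X) * f X) = real (sc Y) * f Y + (\<Sum>X\<in>B-{Y}. real (sc X) * f X)"
      using fin YB by (simp add: sum.remove)
    moreover have "(\<Sum>X\<in>B. real (sc' X) * f X) = real (sc' Y) * f Y + (\<Sum>X\<in>B-{Y}. real (sc X) * f X)"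
      using fin YB by (simp add: sum.remove sc'_def)
    moreover have "real (sc' Y) = real (sc Y) - 1" using scY by (simp add: sc'_def of_nat_diff)
    ultimately show ?thesis by (simp add: algebra_simps)
  qed
  have fold: "foldl pv_step (sc, S, lst) (map fst (rc # rest)) = foldl pv_step st' (map fst rest)"
    using rc st'_def by simp
  show ?case
  proof (cases "rest = []")
    case True
    have "sc Y = 1" using Cons.prems(3) True sumsc scY by simp
    then have z: "(\<Sum>X\<in>B-{Y}. sc X) = 0" using Cons.prems(3) True sumsc by simp
    have sc'Y: "sc' Y = 0" using \<open>sc Y = 1\<close> by (simp add: sc'_def)
    have "(\<Sum>X\<in>B. real (sc' X) * f X) = 0" for f
    proof -
      have "\<forall>X\<in>B-{Y}. sc X = 0" using z fin by simp
      then have "\<forall>X\<in>B. sc' X = 0" using sc'Y unfolding sc'_def by auto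
      then show ?thesis by simp
    qed
    then show ?thesis using True fold lst'[OF sc'Y] YS YB realsum rc
      by (intro exI[of _ Y] exI[of _ "[Y]"]) auto
  next
    case False
    have inv3: "(\<Sum>X\<in>B. sc' X) = length rest" using sumsc sumsc' Cons.prems(3) scY
      by (simp add: sc'_def)
    have inv4: "\<forall>rc\<in>set rest. set (fst rc) = B \<and> (\<forall>x y. before (fst rc) x y \<longrightarrow> snd rc x \<le> snd rc y)"
      using Cons.prems(4) by simp
    have IH: "\<exists>W ys. snd (snd (foldl pv_step (sc', fst (snd st'), snd (snd st')) (map fst rest))) = Some W \<and> W \<in> fst (snd st') \<and>
      length ys = length rest \<and> set ys \<subseteq> B \<and>
      (\<forall>k<length rest. snd (rest!k) W \<le> snd (rest!k) (ys!k)) \<and>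
      (\<forall>f. sum_list (map f ys) = (\<Sum>X\<in>B. real (sc' X) * f X))"
      by (rule Cons.IH[OF False S' inv3 inv4])
    then have IH': "\<exists>W ys. snd (snd (foldl pv_step st' (map fst rest))) = Some W \<and> W \<in> fst (snd st') \<and>
      length ys = length rest \<and> set ys \<subseteq> B \<and>
      (\<forall>k<length rest. snd (rest!k) W \<le> snd (rest!k) (ys!k)) \<and>
      (\<forall>f. sum_list (map f ys) = (\<Sum>X\<in>B. real (sc' X) * f X))"
      using st'_split by simp
    then obtain W ys where W: "snd (snd (foldl pv_step st' (map fst rest))) = Some W"
      "W \<in> fst (snd st')" "length ys = length rest" "set ys \<subseteq> B"
      "\<forall>k<length rest. snd (rest ! k) W \<le> snd (rest ! k) (ys ! k)"
      "\<forall>f. sum_list (map f ys) = (\<Sum>X\<in>B. real (sc' X) * f X)"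
      by blast
    have WS: "W \<in> S" using W(2) S' Cons.prems(2) unfolding sc'_def by (auto split: if_splits)
    have cW: "c W \<le> c Y"
    proof (cases "W = Y")
      case False
      have "W \<in> set r" using WS Cons.prems(2) rB by auto
      then show ?thesis using mono before_last[OF WS _ False[unfolded Y_def]] Y_def by auto
    qed simp
    show ?thesis
    proof (intro exI[of _ W] exI[of _ "Y # ys"] conjI allI impI)
      fix k assume "k < length (rc # rest)"
      then show "snd ((rc # rest) ! k) W \<le> snd ((rc # rest) ! k) ((Y # ys) ! k)"
        using cW rc W(5) by (cases k) auto
    next
      fix f :: "'a \<Rightarrow> real" show "sum_list (map f (Y # ys)) = (\<Sum>X\<in>B. real (sc X) * f X)"
        using W(6) realsum by simp
    qed (use fold W WS YB in auto)
  qed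
qed


lemma ex_min_real: "finite S \<Longrightarrow> S \<noteq> {} \<Longrightarrow> \<exists>x\<in>S. \<forall>y\<in>S. (f x::real) \<le> f y"
proof -
  assume a: "finite S" "S \<noteq> {}"
  have "Min (f ` S) \<in> f ` S" using a by simp
  then obtain x where "x \<in> S" "f x = Min (f ` S)" by auto
  then show ?thesis using a by (intro bexI[of _ x]) (auto intro: Min_le)
qed

lemma hd_filter: "r \<noteq> [] \<Longrightarrow> Q (hd r) \<Longrightarrow> hd (filter Q r) = hd r"
  by (cases r) auto

lemma plu_total:
  assumes "valid_profile A P"
  shows "(\<Sum>Y\<in>A. real (plu Y P)) = real (length P)"
proof -
  have v: "finite A" "\<forall>r\<in>set P. distinct r \<and> set r = A" "A \<noteq> {}" using assms by (auto simp: valid_profile_def)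
  have ne: "\<forall>r\<in>set P. r \<noteq> [] \<and> hd r \<in> A"
  proof
    fix r assume "r \<in> set P"
    then have "set r = A" using v by auto
    then show "r \<noteq> [] \<and> hd r \<in> A" using v(3) hd_in_set[of r] by auto
  qed
  from plu_sum[OF v(1) ne, of "\<lambda>_. 1"] show ?thesis by simp
qed

lemma cancel_m: "(m::real) \<noteq> 0 \<Longrightarrow> m * (a / (e * m)) = a / e"
  by (metis nonzero_mult_div_cancel_left times_divide_eq_right divide_divide_eq_left)

lemma pruned_nonempty:
  assumes "valid_profile A P" "\<epsilon> > 0"
  shows "pruned_set \<epsilon> A P \<noteq> {}"
proof
  assume e: "pruned_set \<epsilon> A P = {}"
  have v: "finite A" "A \<noteq> {}" "P \<noteq> []" using assms by (auto simp: valid_profile_def)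
  define thr where "thr = \<epsilon> * real (length P) / ((6 + \<epsilon>) * real (card A))"
  have lt: "\<forall>Y\<in>A. real (plu Y P) < thr" using e unfolding pruned_set_def thr_def by auto
  have "(\<Sum>Y\<in>A. real (plu Y P)) < (\<Sum>Y\<in>A. thr)"
    by (rule sum_strict_mono[OF v(1) v(2)]) (use lt in auto)
  then have "real (length P) < real (card A) * thr" using plu_total[OF assms(1)] by simp
  also have "\<dots> = \<epsilon> * real (length P) / (6 + \<epsilon>)"
  proof -
    have m: "real (card A) \<noteq> 0" using v by simp
    have e6: "6 + \<epsilon> \<noteq> 0" using assms(2) by simp
    show ?thesis unfolding thr_def using m
      by (rule cancel_m)
  qed
  also have "\<dots> \<le> real (length P)"
  proof -
    have "\<epsilon> * real (length P) \<le> real (length P) * (6 + \<epsilon>)" by (simp add: algebra_simps)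
    then show ?thesis using assms(2) by (simp add: divide_le_eq)
  qed
  finally show False by simp
qed

lemma winner:
  assumes vp: "valid_profile A P" and ep: "\<epsilon> > 0"
    and mono: "\<forall>i<length P. \<forall>x y. before (P!i) x y \<longrightarrow> c i x \<le> (c i y::real)"
  defines "A' \<equiv> pruned_set \<epsilon> A P"
  defines "P' \<equiv> map (filter (\<lambda>x. x \<in> A')) P"
  shows "pruned_plurality_veto \<epsilon> A P \<in> A' \<and> (\<exists>ys. length ys = length P \<and> set ys \<subseteq> A' \<and>
     (\<forall>i<length P. c i (pruned_plurality_veto \<epsilon> A P) \<le> c i (ys!i)) \<and>
     (\<forall>f::'a \<Rightarrow> real. sum_list (map f ys) = (\<Sum>j<length P. f (hd (P'!j)))))"
proof -
  have v: "finite A" "A \<noteq> {}" "P \<noteq> []" "\<forall>r\<in>set P. distinct r \<and> set r = A"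
    using vp by (auto simp: valid_profile_def)
  have A'A: "A' \<subseteq> A" unfolding A'_def pruned_set_def by auto
  have finA': "finite A'" using A'A v(1) finite_subset by blast
  have A'ne: "A' \<noteq> {}" using pruned_nonempty[OF vp ep] A'_def by simp
  have setP': "\<forall>r\<in>set P'. set r = A'" using v(4) A'A unfolding P'_def by auto
  have neP': "\<forall>r\<in>set P'. r \<noteq> [] \<and> hd r \<in> A'"
  proof
    fix r assume "r \<in> set P'"
    then have "set r = A'" using setP' by auto
    then show "r \<noteq> [] \<and> hd r \<in> A'" using A'ne hd_in_set[of r] by auto
  qed
  have lenP': "length P' = length P" unfolding P'_def by simp
  define rcs where "rcs = map (\<lambda>i. (P'!i, c i)) [0..<length P]"
  have mfst: "map fst rcs = P'" 
  proof -
    have "map fst rcs = map (\<lambda>i. P'!i) [0..<length P']" by (simp add: rcs_def lenP')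
    then show ?thesis by (simp add: map_nth)
  qed
  have rcsne: "rcs \<noteq> []" using v(3) unfolding rcs_def by simp
  have tot: "(\<Sum>X\<in>A'. plu X P') = length rcs"
  proof -
    have "(\<Sum>X\<in>A'. real (plu X P')) = real (length P')" using plu_sum[OF finA' neP', of "\<lambda>_. 1"] by simp
    then have "real (\<Sum>X\<in>A'. plu X P') = real (length P')" by simp
    then have "(\<Sum>X\<in>A'. plu X P') = length P'" using of_nat_eq_iff by blast
    then show ?thesis unfolding rcs_def using lenP' by simp
  qed
  have cond: "\<forall>rc\<in>set rcs. set (fst rc) = A' \<and> (\<forall>x y. before (fst rc) x y \<longrightarrow> snd rc x \<le> snd rc y)"
  proof
    fix rc assume "rc \<in> set rcs"
    then obtain i where i: "i < length P" "rc = (P'!i, c i)" unfolding rcs_def by auto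
    have e: "P'!i = filter (\<lambda>x. x \<in> A') (P!i)" using i unfolding P'_def by simp
    have "P'!i \<in> set P'" using i lenP' by simp
    then have s: "set (P'!i) = A'" using setP' by blast
    have "\<forall>x y. before (P'!i) x y \<longrightarrow> c i x \<le> c i y"
    proof (intro allI impI)
      fix x y assume "before (P'!i) x y"
      then have "before (P!i) x y" unfolding e by (rule before_filter)
      then show "c i x \<le> c i y" using mono i by blast
    qed
    then show "set (fst rc) = A' \<and> (\<forall>x y. before (fst rc) x y \<longrightarrow> snd rc x \<le> snd rc y)"
      using s i by simp
  qed
  have PV: "\<exists>W ys. snd (snd (foldl pv_step (\<lambda>X. plu X P', {X \<in> A'. 0 < plu X P'}, None) (map fst rcs))) = Some W \<and>
      W \<in> {X \<in> A'. 0 < plu X P'} \<and> length ys = length rcs \<and> set ys \<subseteq> A' \<and>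
      (\<forall>k<length rcs. snd (rcs ! k) W \<le> snd (rcs ! k) (ys ! k)) \<and>
      (\<forall>f. sum_list (map f ys) = (\<Sum>X\<in>A'. real (plu X P') * f X))"
    by (rule pv_main[OF finA' rcsne refl tot cond])
  obtain W ys where W: "snd (snd (foldl pv_step (\<lambda>X. plu X P', {X \<in> A'. 0 < plu X P'}, None) P')) = Some W"
      "W \<in> {X \<in> A'. 0 < plu X P'}" "length ys = length rcs" "set ys \<subseteq> A'"
      "\<forall>k<length rcs. snd (rcs ! k) W \<le> snd (rcs ! k) (ys ! k)"
      "\<forall>f. sum_list (map f ys) = (\<Sum>X\<in>A'. real (plu X P') * f X)" using PV unfolding mfst by blast
  have pv: "pruned_plurality_veto \<epsilon> A P = W"
  proof -
    have "pruned_plurality_veto \<epsilon> A P = plurality_veto A' P'"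
      unfolding pruned_plurality_veto_def A'_def P'_def Let_def by (rule refl)
    also have "\<dots> = W" unfolding plurality_veto_def using W(1) by simp
    finally show ?thesis .
  qed
  show ?thesis
  proof (intro conjI exI[of _ ys] allI impI)
    show "pruned_plurality_veto \<epsilon> A P \<in> A'" using pv W(2) by simp
    show "length ys = length P" using W(3) rcs_def by simp
    show "set ys \<subseteq> A'" by fact
    fix i assume "i < length P"
    then show "c i (pruned_plurality_veto \<epsilon> A P) \<le> c i (ys ! i)" using W(5) pv unfolding rcs_def by auto
  next
    fix f :: "'a \<Rightarrow> real" show "sum_list (map f ys) = (\<Sum>j<length P. f (hd (P' ! j)))"
      using W(6) plu_sum[OF finA' neP', of f] lenP' by simp
  qed
qed


lemma before_set: "before r x y \<Longrightarrow> x \<in> set r \<and> y \<in> set r"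
  unfolding before_def by auto

lemma metric_part:
  assumes ep: "\<epsilon> > 0" and vp: "valid_profile A P" and mc: "metric_consistent A P d" and XA: "X \<in> A"
  shows "SC P d (pruned_plurality_veto \<epsilon> A P) \<le> (9 + \<epsilon>) * SC P d X"
proof -
  have v: "finite A" "A \<noteq> {}" "P \<noteq> []" "\<forall>r\<in>set P. distinct r \<and> set r = A"
    using vp by (auto simp: valid_profile_def)
  define n where "n = length P"
  define A' where "A' = pruned_set \<epsilon> A P"
  define P' where "P' = map (filter (\<lambda>x. x \<in> A')) P"
  define W where "W = pruned_plurality_veto \<epsilon> A P"
  define thr where "thr = \<epsilon> * real (length P) / ((6 + \<epsilon>) * real (card A))"
  have A'A: "A' \<subseteq> A" unfolding A'_def pruned_set_def by auto
  have finA': "finite A'" using A'A v(1) finite_subset by blast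
  have A'ne: "A' \<noteq> {}" using pruned_nonempty[OF vp ep] A'_def by simp
  have pm: "pseudometric_on (points A P) d" using mc by (simp add: metric_consistent_def)
  have cons: "\<And>i Y Y'. i < n \<Longrightarrow> Y \<in> A \<Longrightarrow> Y' \<in> A \<Longrightarrow> prefers P i Y Y' \<Longrightarrow> d (Inr i) (Inl Y) \<le> d (Inr i) (Inl Y')"
    using mc n_def by (simp add: metric_consistent_def)
  have ptA: "\<And>Y. Y \<in> A \<Longrightarrow> Inl Y \<in> points A P" by (simp add: points_def)
  have ptN: "\<And>i. i < n \<Longrightarrow> Inr i \<in> points A P" by (simp add: points_def n_def)
  have nn: "\<And>x y. x \<in> points A P \<Longrightarrow> y \<in> points A P \<Longrightarrow> d x y \<ge> 0" using pm by (simp add: pseudometric_on_def)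
  have sym: "\<And>x y. x \<in> points A P \<Longrightarrow> y \<in> points A P \<Longrightarrow> d x y = d y x" using pm by (simp add: pseudometric_on_def)
  have tri: "\<And>x y z. x \<in> points A P \<Longrightarrow> y \<in> points A P \<Longrightarrow> z \<in> points A P \<Longrightarrow> d x z \<le> d x y + d y z"
    using pm unfolding pseudometric_on_def by blast
  have setP: "\<And>j. j < n \<Longrightarrow> set (P!j) = A" using v(4) n_def by auto
  have neP: "\<And>j. j < n \<Longrightarrow> P!j \<noteq> []" using setP v(2) by fastforce
  have P'j: "\<And>j. j < n \<Longrightarrow> P'!j = filter (\<lambda>x. x \<in> A') (P!j)" unfolding P'_def n_def by simp
  have setP': "\<And>j. j < n \<Longrightarrow> set (P'!j) = A'" using P'j setP A'A by auto
  have neP': "\<And>j. j < n \<Longrightarrow> P'!j \<noteq> []" using setP' A'ne by fastforce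
  have dpref: "\<And>j Y Y'. j < n \<Longrightarrow> before (P!j) Y Y' \<Longrightarrow> d (Inr j) (Inl Y) \<le> d (Inr j) (Inl Y')"
  proof -
    fix j Y Y' assume j: "j < n" and b: "before (P!j) Y Y'"
    have "Y \<in> A" "Y' \<in> A" using before_set[OF b] setP[OF j] by auto
    moreover have "prefers P i Y Y'" if "i = j" for i using before_idx[OF b] that unfolding prefers_def by blast
    ultimately show "d (Inr j) (Inl Y) \<le> d (Inr j) (Inl Y')" using cons j by blast
  qed
  have mono: "\<forall>i<length P. \<forall>x y. before (P!i) x y \<longrightarrow> d (Inr i) (Inl x) \<le> d (Inr i) (Inl y)"
    using dpref n_def by auto
  from winner[OF vp ep mono] obtain ys where
    WA': "W \<in> A'" and ys: "length ys = n" "set ys \<subseteq> A'"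
      "\<forall>i<n. d (Inr i) (Inl W) \<le> d (Inr i) (Inl (ys!i))"
      "\<forall>f::'a \<Rightarrow> real. sum_list (map f ys) = (\<Sum>j<n. f (hd (P'!j)))"
    unfolding W_def[symmetric] A'_def[symmetric] P'_def[symmetric] n_def[symmetric] by blast
  define g where "g = (\<lambda>Y. d (Inl X) (Inl Y))"
  define t where "t = (\<lambda>j. hd (P'!j))"
  define T where "T = (\<lambda>j. hd (P!j))"
  define pr where "pr = (\<lambda>j. if T j \<in> A' then 0 else (1::real))"
  define SCX where "SCX = SC P d X"
  have SCX_def': "SCX = (\<Sum>j<n. d (Inr j) (Inl X))" unfolding SCX_def SC_def n_def by simp
  have SCnn: "SCX \<ge> 0" unfolding SCX_def' by (rule sum_nonneg) (use nn ptN ptA XA in auto)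
  have ysA: "\<And>i. i < n \<Longrightarrow> ys!i \<in> A" using ys(1,2) A'A nth_mem by blast
  have S1: "SC P d W \<le> SCX + (\<Sum>j<n. g (t j))"
  proof -
    have "SC P d W = (\<Sum>i<n. d (Inr i) (Inl W))" unfolding SC_def n_def by simp
    also have "\<dots> \<le> (\<Sum>i<n. d (Inr i) (Inl X) + g (ys!i))"
    proof (rule sum_mono)
      fix i assume "i \<in> {..<n}"
      then have i: "i < n" by simp
      have "d (Inr i) (Inl W) \<le> d (Inr i) (Inl (ys!i))" using ys(3) i by blast
      also have "\<dots> \<le> d (Inr i) (Inl X) + g (ys!i)" unfolding g_def
        using tri[OF ptN[OF i] ptA[OF XA] ptA[OF ysA[OF i]]] .
      finally show "d (Inr i) (Inl W) \<le> d (Inr i) (Inl X) + g (ys!i)" .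
    qed
    also have "\<dots> = SCX + (\<Sum>i<n. g (ys!i))" unfolding SCX_def' by (simp add: sum.distrib)
    also have "(\<Sum>i<n. g (ys!i)) = sum_list (map g ys)"
      using ys(1) by (simp add: sum_list_sum_nth atLeast0LessThan)
    also have "\<dots> = (\<Sum>j<n. g (t j))" using ys(4) t_def by simp
    finally show ?thesis .
  qed
  have tA': "\<And>j. j < n \<Longrightarrow> t j \<in> A'" unfolding t_def using setP' neP' hd_in_set by blast
  have TA: "\<And>j. j < n \<Longrightarrow> T j \<in> A" unfolding T_def using setP neP hd_in_set by blast
  have F3: "\<And>j Y. j < n \<Longrightarrow> Y \<in> A \<Longrightarrow> d (Inr j) (Inl (T j)) \<le> d (Inr j) (Inl Y)"
  proof -
    fix j Y assume j: "j < n" and Y: "Y \<in> A"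
    show "d (Inr j) (Inl (T j)) \<le> d (Inr j) (Inl Y)"
    proof (cases "Y = T j")
      case False
      then have "before (P!j) (T j) Y" unfolding T_def using before_hd[OF neP[OF j]] setP[OF j] Y by auto
      then show ?thesis using dpref j unfolding T_def by blast
    qed simp
  qed
  have F1: "\<And>j Y. j < n \<Longrightarrow> Y \<in> A' \<Longrightarrow> d (Inr j) (Inl (t j)) \<le> d (Inr j) (Inl Y)"
  proof -
    fix j Y assume j: "j < n" and Y: "Y \<in> A'"
    show "d (Inr j) (Inl (t j)) \<le> d (Inr j) (Inl Y)"
    proof (cases "Y = t j")
      case False
      then have "before (P'!j) (t j) Y" unfolding t_def using before_hd[OF neP'[OF j]] setP'[OF j] Y by auto
      then have "before (P!j) (t j) Y" using P'j[OF j] before_filter by metis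
      then show ?thesis using dpref j by blast
    qed simp
  qed
  have F2: "\<And>j. j < n \<Longrightarrow> T j \<in> A' \<Longrightarrow> t j = T j"
    unfolding t_def T_def using P'j neP hd_filter by metis
  obtain Z where Z: "Z \<in> A'" "\<forall>Y\<in>A'. g Z \<le> g Y" using ex_min_real[OF finA' A'ne, of g] by blast
  define \<delta> where "\<delta> = g Z"
  have dnn: "\<delta> \<ge> 0" unfolding \<delta>_def g_def using nn ptA XA Z A'A by blast
  have gt: "\<And>j. j < n \<Longrightarrow> g (t j) \<le> d (Inr j) (Inl X) + d (Inr j) (Inl (t j))"
  proof -
    fix j assume j: "j < n"
    have "g (t j) \<le> d (Inl X) (Inr j) + d (Inr j) (Inl (t j))" unfolding g_def
      using tri[OF ptA[OF XA] ptN[OF j] ptA] tA'[OF j] A'A by blast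
    then show "g (t j) \<le> d (Inr j) (Inl X) + d (Inr j) (Inl (t j))"
      using sym[OF ptA[OF XA] ptN[OF j]] by simp
  qed
  have B: "\<And>j. j < n \<Longrightarrow> g (t j) \<le> 2 * d (Inr j) (Inl X) + pr j * \<delta> \<and> (1 - pr j) * \<delta> \<le> 2 * d (Inr j) (Inl X)"
  proof -
    fix j assume j: "j < n"
    show "g (t j) \<le> 2 * d (Inr j) (Inl X) + pr j * \<delta> \<and> (1 - pr j) * \<delta> \<le> 2 * d (Inr j) (Inl X)"
    proof (cases "T j \<in> A'")
      case True
      have "d (Inr j) (Inl (t j)) \<le> d (Inr j) (Inl X)" using F2[OF j True] F3[OF j XA] by simp
      then have "g (t j) \<le> 2 * d (Inr j) (Inl X)" using gt[OF j] by simp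
      moreover have "\<delta> \<le> g (t j)" unfolding \<delta>_def using Z tA'[OF j] by blast
      ultimately show ?thesis using True pr_def by simp
    next
      case False
      have "d (Inr j) (Inl (t j)) \<le> d (Inr j) (Inl Z)" using F1[OF j Z(1)] .
      also have "\<dots> \<le> d (Inr j) (Inl X) + \<delta>" unfolding \<delta>_def g_def
        using tri[OF ptN[OF j] ptA[OF XA] ptA] Z(1) A'A by blast
      finally have "g (t j) \<le> 2 * d (Inr j) (Inl X) + \<delta>" using gt[OF j] by simp
      moreover have "d (Inr j) (Inl X) \<ge> 0" using nn ptN[OF j] ptA[OF XA] by blast
      ultimately show ?thesis using False pr_def by simp
    qed
  qed
  define k where "k = (\<Sum>j<n. pr j)"
  have S2: "(\<Sum>j<n. g (t j)) \<le> 2 * SCX + k * \<delta>"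
  proof -
    have "(\<Sum>j<n. g (t j)) \<le> (\<Sum>j<n. 2 * d (Inr j) (Inl X) + pr j * \<delta>)"
      by (rule sum_mono) (use B in auto)
    also have "\<dots> = 2 * SCX + k * \<delta>" unfolding SCX_def' k_def
      by (simp add: sum.distrib sum_distrib_left sum_distrib_right)
    finally show ?thesis .
  qed
  have S3: "(real n - k) * \<delta> \<le> 2 * SCX"
  proof -
    have "(\<Sum>j<n. (1 - pr j) * \<delta>) \<le> (\<Sum>j<n. 2 * d (Inr j) (Inl X))"
      by (rule sum_mono) (use B in auto)
    moreover have "(\<Sum>j<n. (1 - pr j) * \<delta>) = (real n - k) * \<delta>" unfolding k_def
      by (simp add: sum_distrib_right sum_subtractf left_diff_distrib)
    moreover have "(\<Sum>j<n. 2 * d (Inr j) (Inl X)) = 2 * SCX" unfolding SCX_def' by (simp add: sum_distrib_left)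
    ultimately show ?thesis by simp
  qed
  have S4: "(6 + \<epsilon>) * k \<le> \<epsilon> * real n"
  proof -
    define ind where "ind = (\<lambda>Y. if Y \<in> A' then 0 else (1::real))"
    have neP0: "\<forall>r\<in>set P. r \<noteq> [] \<and> hd r \<in> A"
    proof
      fix r assume "r \<in> set P"
      then have "set r = A" using v by auto
      then show "r \<noteq> [] \<and> hd r \<in> A" using v(2) hd_in_set[of r] by auto
    qed
    have "k = (\<Sum>j<n. ind (hd (P!j)))" unfolding k_def pr_def ind_def T_def by simp
    also have "\<dots> = (\<Sum>Y\<in>A. real (plu Y P) * ind Y)" using plu_sum[OF v(1) neP0, of ind] n_def by simp
    also have "\<dots> \<le> (\<Sum>Y\<in>A. thr)"
    proof (rule sum_mono)
      fix Y assume Y: "Y \<in> A"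
      have thr0: "thr \<ge> 0" unfolding thr_def using ep by simp
      show "real (plu Y P) * ind Y \<le> thr"
      proof (cases "Y \<in> A'")
        case False
        then have "real (plu Y P) < thr" using Y unfolding A'_def pruned_set_def thr_def by auto
        then show ?thesis using False ind_def by simp
      qed (use thr0 ind_def in simp)
    qed
    also have "\<dots> = real (card A) * thr" by simp
    also have "\<dots> = \<epsilon> * real n / (6 + \<epsilon>)" unfolding thr_def n_def
      by (rule cancel_m) (use v in simp)
    finally have "k \<le> \<epsilon> * real n / (6 + \<epsilon>)" .
    then show ?thesis using ep by (simp add: le_divide_eq mult.commute)
  qed
  have P1: "(6 + \<epsilon>) * k * \<delta> \<le> \<epsilon> * real n * \<delta>" using S4 dnn by (rule mult_right_mono)
  have P2: "\<epsilon> * ((real n - k) * \<delta>) \<le> \<epsilon> * (2 * SCX)" using S3 ep by simp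
  have P3: "\<epsilon> * SCX \<ge> 0" using ep SCnn by simp
  have "6 * (k * \<delta>) \<le> 2 * (\<epsilon> * SCX)" using P1 P2 by (simp add: algebra_simps)
  then have "k * \<delta> \<le> (6 + \<epsilon>) * SCX" using P3 SCnn by (simp add: algebra_simps)
  then have "SC P d W \<le> (9 + \<epsilon>) * SCX" using S1 S2 by (simp add: algebra_simps)
  then show ?thesis unfolding W_def SCX_def .
qed


lemma util_part:
  assumes ep: "\<epsilon> > 0" and vp: "valid_profile A P" and uc: "util_consistent A P u" and XA: "X \<in> A"
  shows "SW P u X \<le> (6 + \<epsilon>) * real (card A) ^ 2 / \<epsilon> * SW P u (pruned_plurality_veto \<epsilon> A P)"
proof -
  have v: "finite A" "A \<noteq> {}" "P \<noteq> []" "\<forall>r\<in>set P. distinct r \<and> set r = A"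
    using vp by (auto simp: valid_profile_def)
  define n where "n = length P"
  define m where "m = real (card A)"
  define A' where "A' = pruned_set \<epsilon> A P"
  define W where "W = pruned_plurality_veto \<epsilon> A P"
  define thr where "thr = \<epsilon> * real (length P) / ((6 + \<epsilon>) * real (card A))"
  have mpos: "m > 0" unfolding m_def using v by (simp add: card_gt_0_iff)
  have u0: "\<And>i Y. i < n \<Longrightarrow> Y \<in> A \<Longrightarrow> u i Y \<ge> 0" using uc n_def by (simp add: util_consistent_def)
  have u1: "\<And>i. i < n \<Longrightarrow> (\<Sum>Y\<in>A. u i Y) = 1" using uc n_def by (simp add: util_consistent_def)
  have upref: "\<And>i Y Y'. i < n \<Longrightarrow> Y \<in> A \<Longrightarrow> Y' \<in> A \<Longrightarrow> prefers P i Y Y' \<Longrightarrow> u i Y \<ge> u i Y'"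
    using uc n_def by (simp add: util_consistent_def)
  have mono: "\<forall>i<length P. \<forall>x y. before (P!i) x y \<longrightarrow> (\<lambda>_ _. 0::real) i x \<le> (\<lambda>_ _. 0) i y" by simp
  have WA': "W \<in> A'" using winner[OF vp ep mono] unfolding W_def A'_def by blast
  then have WA: "W \<in> A" and plW: "real (plu W P) \<ge> thr" unfolding A'_def pruned_set_def thr_def by auto
  have setP: "\<And>j. j < n \<Longrightarrow> set (P!j) = A" using v(4) n_def by auto
  have neP: "\<And>j. j < n \<Longrightarrow> P!j \<noteq> []" using setP v(2) by fastforce
  define T where "T = (\<lambda>j. hd (P!j))"
  have TA: "\<And>j. j < n \<Longrightarrow> T j \<in> A" unfolding T_def using setP neP hd_in_set by blast
  have uT: "\<And>j Y. j < n \<Longrightarrow> Y \<in> A \<Longrightarrow> u j Y \<le> u j (T j)"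
  proof -
    fix j Y assume j: "j < n" and Y: "Y \<in> A"
    show "u j Y \<le> u j (T j)"
    proof (cases "Y = T j")
      case False
      then have b: "before (P!j) (T j) Y" unfolding T_def using before_hd[OF neP[OF j]] setP[OF j] Y by auto
      have "prefers P j (T j) Y" using before_idx[OF b] unfolding prefers_def by blast
      then show ?thesis using upref j TA[OF j] Y by blast
    qed simp
  qed
  have uTm: "\<And>j. j < n \<Longrightarrow> u j (T j) \<ge> 1 / m"
  proof -
    fix j assume j: "j < n"
    have "1 = (\<Sum>Y\<in>A. u j Y)" using u1[OF j] by simp
    also have "\<dots> \<le> (\<Sum>Y\<in>A. u j (T j))" by (rule sum_mono) (use uT j in auto)
    also have "\<dots> = m * u j (T j)" unfolding m_def by simp
    finally have "1 \<le> m * u j (T j)" .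
    then show "u j (T j) \<ge> 1 / m" using mpos by (simp add: divide_le_eq mult.commute)
  qed
  have SWX: "SW P u X \<le> real n"
  proof -
    have "SW P u X = (\<Sum>i<n. u i X)" unfolding SW_def n_def by simp
    also have "\<dots> \<le> (\<Sum>i<n. 1)"
    proof (rule sum_mono)
      fix i assume "i \<in> {..<n}"
      then have i: "i < n" by simp
      have "u i X \<le> (\<Sum>Y\<in>A. u i Y)" by (rule member_le_sum) (use XA v u0 i in auto)
      then show "u i X \<le> 1" using u1[OF i] by simp
    qed
    finally show ?thesis by simp
  qed
  have neP0: "\<forall>r\<in>set P. r \<noteq> [] \<and> hd r \<in> A"
  proof
    fix r assume "r \<in> set P"
    then have "set r = A" using v by auto
    then show "r \<noteq> [] \<and> hd r \<in> A" using v(2) hd_in_set[of r] by auto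
  qed
  define ind where "ind = (\<lambda>Y. if Y = W then (1::real) else 0)"
  have pluW: "real (plu W P) = (\<Sum>j<n. ind (T j))"
  proof -
    have "(\<Sum>Y\<in>A. real (plu Y P) * ind Y) = real (plu W P)"
      using v(1) WA unfolding ind_def by (simp add: if_distrib cong: if_cong)
    then show ?thesis using plu_sum[OF v(1) neP0, of ind] n_def T_def by simp
  qed
  have SWW: "SW P u W \<ge> real (plu W P) / m"
  proof -
    have "real (plu W P) / m = (\<Sum>j<n. ind (T j) / m)" using pluW by (simp add: sum_divide_distrib)
    also have "\<dots> \<le> (\<Sum>j<n. u j W)"
    proof (rule sum_mono)
      fix j assume "j \<in> {..<n}"
      then have j: "j < n" by simp
      show "ind (T j) / m \<le> u j W"
        using uTm[OF j] u0[OF j WA] unfolding ind_def by (auto split: if_splits)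
    qed
    also have "\<dots> = SW P u W" unfolding SW_def n_def by simp
    finally show ?thesis .
  qed
  define c where "c = (6 + \<epsilon>) * m ^ 2 / \<epsilon>"
  have c0: "c \<ge> 0" unfolding c_def using ep mpos by simp
  have "c * (thr / m) = real n"
  proof -
    have "c * (thr / m) = (6 + \<epsilon>) / \<epsilon> * (m * thr)"
      unfolding c_def using mpos by (simp add: power2_eq_square)
    also have "m * thr = \<epsilon> * real n / (6 + \<epsilon>)" unfolding thr_def m_def n_def
      by (rule cancel_m) (use mpos m_def in simp)
    also have "(6 + \<epsilon>) / \<epsilon> * (\<epsilon> * real n / (6 + \<epsilon>)) = real n" using ep by simp
    finally show ?thesis .
  qed
  have "c * (thr / m) \<le> c * (real (plu W P) / m)"
    using plW mpos c0 by (intro mult_left_mono divide_right_mono) auto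
  also have "\<dots> \<le> c * SW P u W" using SWW c0 by (rule mult_left_mono)
  finally have "real n \<le> c * SW P u W" using \<open>c * (thr / m) = real n\<close> by simp
  then show ?thesis using SWX unfolding c_def m_def W_def by simp
qed

theorem mainTheorem3:
  fixes \<epsilon> :: real
  assumes "\<epsilon> > 0"
  shows "metric_distortion_at_most (pruned_plurality_veto \<epsilon> :: 'a set \<Rightarrow> 'a list list \<Rightarrow> 'a) (9 + \<epsilon>)
       \<and> util_distortion_at_most (pruned_plurality_veto \<epsilon> :: 'a set \<Rightarrow> 'a list list \<Rightarrow> 'a)
           (\<lambda>m. (6 + \<epsilon>) * real m ^ 2 / \<epsilon>)"
  unfolding metric_distortion_at_most_def util_distortion_at_most_def
proof (intro conjI allI impI ballI)
  fix A :: "'a set" and P d X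
  assume "valid_profile A P" "metric_consistent A P d" "X \<in> A"
  then show "SC P d (pruned_plurality_veto \<epsilon> A P) \<le> (9 + \<epsilon>) * SC P d X"
    by (rule metric_part[OF assms])
next
  fix A :: "'a set" and P u X
  assume "valid_profile A P" "util_consistent A P u" "X \<in> A"
  then show "SW P u X \<le> (6 + \<epsilon>) * real (card A) ^ 2 / \<epsilon> * SW P u (pruned_plurality_veto \<epsilon> A P)"
    by (rule util_part[OF assms])
qed

end
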